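(* Let $G=(V,E)$ be a finite, connected, bipartite cubic graph. For every $A\in\mathcal F(G)$, every $x\in V$, and every neighbour $x'$ of $x$, there exists a path $z_1z_2\cdots z_{2k}$ in $G$ (with distinct vertices, $k\ge1$) such that $z_1=x$, $z_{2k}=x'$, $z_iz_{i+1}\notin A$ for all odd $i$, and $z_iz_{i+1}\in A$ for all even $i$.
   Context: $\mathcal F(G)=\{A\subseteq E: d_w(A)=2\text{ for all }w\in V\}$, where $d_w(A)$ is the number of edges of $A$ incident to $w$ (the 2-factors of $G$). *)

theory Defs
  imports Main
begin

definition simple_graph :: "'a set \<Rightarrow> 'a set set \<Rightarrow> bool" where
  "simple_graph V E \<longleftrightarrow> finite V \<and> (\<forall>e\<in>E. e \<subseteq> V \<and> card e = 2)"

definition degree :: "'a set set \<Rightarrow> 'a \<Rightarrow> nat" where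
  "degree A w = card {e\<in>A. w \<in> e}"

definition cubic :: "'a set \<Rightarrow> 'a set set \<Rightarrow> bool" where
  "cubic V E \<longleftrightarrow> (\<forall>w\<in>V. degree E w = 3)"

definition adj :: "'a set set \<Rightarrow> 'a \<Rightarrow> 'a \<Rightarrow> bool" where
  "adj E u v \<longleftrightarrow> {u, v} \<in> E"

definition connected_graph :: "'a set \<Rightarrow> 'a set set \<Rightarrow> bool" where
  "connected_graph V E \<longleftrightarrow> (\<forall>u\<in>V. \<forall>v\<in>V. (adj E)\<^sup>*\<^sup>* u v)"

definition bipartite :: "'a set \<Rightarrow> 'a set set \<Rightarrow> bool" where
  "bipartite V E \<longleftrightarrow> (\<exists>X. X \<subseteq> V \<and> (\<forall>e\<in>E. card (e \<inter> X) = 1))"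

definition two_factors :: "'a set \<Rightarrow> 'a set set \<Rightarrow> 'a set set set" where
  "two_factors V E = {A. A \<subseteq> E \<and> (\<forall>w\<in>V. degree A w = 2)}"

definition is_path :: "'a set \<Rightarrow> 'a set set \<Rightarrow> 'a list \<Rightarrow> bool" where
  "is_path V E zs \<longleftrightarrow> zs \<noteq> [] \<and> distinct zs \<and> set zs \<subseteq> V \<and>
     (\<forall>i. Suc i < length zs \<longrightarrow> {zs ! i, zs ! Suc i} \<in> E)"

end

theory Submission
  imports Defs
begin

lemma deg_nb:
  assumes "\<forall>e\<in>F. card e = 2"
  shows "card {e\<in>F. v\<in>e} = card {w. {v,w}\<in>F}"
proof -
  have "bij_betw (\<lambda>w. {v,w}) {w. {v,w}\<in>F} {e\<in>F. v\<in>e}"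
  proof (rule bij_betwI')
    fix w w' assume "w \<in> {w. {v,w}\<in>F}" "w' \<in> {w. {v,w}\<in>F}"
    show "({v, w} = {v, w'}) = (w = w')" by (auto simp: doubleton_eq_iff)
  next
    fix w assume "w \<in> {w. {v,w}\<in>F}" thus "{v,w} \<in> {e\<in>F. v\<in>e}" by auto
  next
    fix e assume e: "e \<in> {e\<in>F. v\<in>e}"
    then obtain a b where "e = {a,b}" using assms card_2_iff by (metis (no_types, lifting) mem_Collect_eq)
    with e have "e = {v, if a = v then b else a}" by auto
    with e show "\<exists>w\<in>{w. {v,w}\<in>F}. e = {v,w}" by auto
  qed
  thus ?thesis by (simp add: bij_betw_same_card)
qed

locale cfg =
  fixes V :: "'a set" and E A :: "'a set set" and S :: "'a set"
  assumes fin: "finite V"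
  and edges: "\<And>e. e\<in>E \<Longrightarrow> e \<subseteq> V \<and> card e = 2"
  and degE: "\<And>v. v\<in>V \<Longrightarrow> card {w. {v,w}\<in>E} = 3"
  and degA: "\<And>v. v\<in>V \<Longrightarrow> card {w. {v,w}\<in>A} = 2"
  and AE: "A \<subseteq> E"
  and bip: "\<And>a b. {a,b}\<in>E \<Longrightarrow> (a\<in>S \<longleftrightarrow> b\<notin>S)"
  and SV: "S \<subseteq> V"
begin

lemma eV: "{a,b} \<in> E \<Longrightarrow> a \<in> V \<and> b \<in> V"
  using edges by blast

lemma nbfin: "finite {w. {v,w}\<in>F}" if "F \<subseteq> E"
  using that eV fin by (metis (no_types, lifting) mem_Collect_eq rev_finite_subset subsetD subsetI)

lemma finA: "finite {w. {v,w}\<in>A}" using nbfin AE by blast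
lemma finEA: "finite {w. {v,w}\<in>E - A}"
  by (rule finite_subset[OF _ fin]) (use eV in auto)

definition m :: "'a \<Rightarrow> 'a" where "m v = (THE w. {v,w} \<in> E - A)"

lemma M1: assumes "v \<in> V" shows "\<exists>!w. {v,w} \<in> E - A"
proof -
  have "{w. {v,w}\<in>E} = {w. {v,w}\<in>A} \<union> {w. {v,w}\<in>E - A}" using AE by auto
  moreover have "card ({w. {v,w}\<in>A} \<union> {w. {v,w}\<in>E - A}) = card {w. {v,w}\<in>A} + card {w. {v,w}\<in>E - A}"
    by (rule card_Un_disjoint) (auto simp only: finA finEA)
  ultimately have "card {w. {v,w}\<in>E - A} = 1" using degE[OF assms] degA[OF assms] by simp
  then obtain w where "{w. {v,w}\<in>E - A} = {w}" using card_1_singletonE by blast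
  hence "\<And>u. {v,u} \<in> E - A \<longleftrightarrow> u = w" by (metis (no_types, lifting) mem_Collect_eq singleton_iff)
  thus ?thesis by (intro ex1I[of _ w]) simp_all
qed

lemma mE: "v \<in> V \<Longrightarrow> {v, m v} \<in> E - A"
  unfolding m_def using M1 theI' by metis

lemma muniq: "{v,w} \<in> E - A \<Longrightarrow> w = m v"
  using M1 mE eV by (metis DiffD1)

lemma mV: "v \<in> V \<Longrightarrow> m v \<in> V"
  using mE eV by blast

lemma mm: "v \<in> V \<Longrightarrow> m (m v) = v"
  using mE muniq by (metis insert_commute)

lemma minj: "inj_on m V"
  by (metis inj_onI mm)

inductive reach for x where
  r0: "reach x x"
| rs: "reach x u \<Longrightarrow> {m u, w} \<in> A \<Longrightarrow> reach x w"

lemma reachS: "reach x u \<Longrightarrow> x \<in> S \<Longrightarrow> u \<in> S"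
proof (induction rule: reach.induct)
  case r0 then show ?case by simp
next
  case (rs u w)
  have "u \<in> V" using rs SV by auto
  have "m u \<notin> S" using bip mE[OF \<open>u\<in>V\<close>] rs by blast
  moreover have "{m u, w} \<in> E" using rs AE by auto
  ultimately show ?case using bip by blast
qed

lemma closure:
  assumes "x \<in> S" and ru: "reach x u" and uv: "{u,v} \<in> A"
  shows "v \<in> m ` {u. reach x u}"
proof -
  let ?R = "{u. reach x u}"
  let ?N = "m ` ?R"
  have RV: "?R \<subseteq> V" using reachS assms(1) SV by blast
  have finR: "finite ?R" using RV fin finite_subset by blast
  have cN: "card ?N = card ?R" using card_image minj RV inj_on_subset by blast
  have NV: "?N \<subseteq> V" using RV mV by blast
  let ?P = "SIGMA u:?R. {v. {u,v}\<in>A}"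
  let ?T = "SIGMA v:?N. {u. {v,u}\<in>A}"
  let ?Q = "(\<lambda>(v,u). (u,v)) ` ?T"
  have "(\<Sum>a\<in>?R. card {v. {a, v} \<in> A}) = (\<Sum>a\<in>?R. 2)"
    using RV degA by (intro sum.cong) auto
  hence cP: "card ?P = 2 * card ?R"
    using finR by (subst card_SigmaI) (auto intro: finA)
  have "(\<Sum>a\<in>?N. card {v. {a, v} \<in> A}) = (\<Sum>a\<in>?N. 2)"
    using NV degA by (intro sum.cong) auto
  hence cQ0: "card ?T = 2 * card ?N"
    using finR by (subst card_SigmaI) (auto intro: finA)
  have cQ: "card ?Q = card ?T"
    by (rule card_image) (auto simp: inj_on_def)
  have sub: "?Q \<subseteq> ?P"
  proof
    fix p assume "p \<in> ?Q"
    then obtain u0 u where p: "p = (u, m u0)" "reach x u0" "{m u0, u} \<in> A" by auto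
    then have "reach x u" by (auto intro: rs)
    thus "p \<in> ?P" using p by (auto simp: insert_commute)
  qed
  have finP: "finite ?P" using finR by (auto intro: finA)
  have "?Q = ?P" using card_subset_eq[OF finP sub] cP cQ cQ0 cN by simp
  moreover have "(u,v) \<in> ?P" using ru uv by auto
  ultimately have "(u,v) \<in> ?Q" by simp
  thus ?thesis by auto
qed


lemma walk:
  "reach x w \<Longrightarrow> \<exists>us. us \<noteq> [] \<and> us!0 = x \<and> last us = w \<and> distinct us \<and> set us \<subseteq> {u. reach x u} \<and>
     (\<forall>j. Suc j < length us \<longrightarrow> {m (us!j), us!Suc j} \<in> A)"
proof (induction rule: reach.induct)
  case r0 show ?case by (intro exI[of _ "[x]"]) (auto intro: reach.intros)
next
  case (rs u w)
  then obtain us where us: "us \<noteq> []" "us!0 = x" "last us = u" "distinct us" "set us \<subseteq> {u. reach x u}"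
     "\<forall>j. Suc j < length us \<longrightarrow> {m (us!j), us!Suc j} \<in> A" by blast
  show ?case
  proof (cases "w \<in> set us")
    case True
    then obtain i where i: "i < length us" "us!i = w" by (metis in_set_conv_nth)
    let ?vs = "take (Suc i) us"
    have "last ?vs = w" using i by (simp add: take_Suc_conv_app_nth)
    moreover have "set ?vs \<subseteq> set us" by (rule set_take_subset)
    ultimately show ?thesis using us i
      by (intro exI[of _ ?vs]) auto
  next
    case False
    let ?vs = "us @ [w]"
    have "\<forall>j. Suc j < length ?vs \<longrightarrow> {m (?vs!j), ?vs!Suc j} \<in> A"
    proof (intro allI impI)
      fix j assume j: "Suc j < length ?vs"
      show "{m (?vs!j), ?vs!Suc j} \<in> A"
      proof (cases "Suc j < length us")
        case True thus ?thesis using us(6) by (simp add: nth_append)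
      next
        case False
        hence "j = length us - 1" using j by simp
        moreover have "us ! (length us - 1) = u" using us by (simp add: last_conv_nth)
        ultimately show ?thesis using rs(2) us(1) False j by (simp add: nth_append)
      qed
    qed
    thus ?thesis using us False rs by (intro exI[of _ ?vs]) (auto simp: nth_append intro: reach.intros)
  qed
qed

lemma cover:
  assumes "x \<in> S" "(adj E)\<^sup>*\<^sup>* x v"
  shows "v \<in> {u. reach x u} \<union> m ` {u. reach x u}"
  using assms(2)
proof (induction rule: rtranclp_induct)
  case base then show ?case by (auto intro: reach.intros)
next
  case (step u w)
  have uw: "{u,w} \<in> E" using step(2) by (simp add: adj_def)
  have uV: "u \<in> V" using eV uw by blast
  from step(3) show ?case
  proof
    assume ru: "u \<in> {u. reach x u}"
    show ?thesis
    proof (cases "{u,w} \<in> A")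
      case True thus ?thesis using closure[OF assms(1)] ru by auto
    next
      case False hence "w = m u" using muniq uw by blast
      thus ?thesis using ru by auto
    qed
  next
    assume "u \<in> m ` {u. reach x u}"
    then obtain u0 where u0: "reach x u0" "u = m u0" by auto
    have u0V: "u0 \<in> V" using reachS[OF u0(1) assms(1)] SV by auto
    show ?thesis
    proof (cases "{u,w} \<in> A")
      case True thus ?thesis using u0 by (auto intro: reach.intros)
    next
      case False hence "w = m u" using muniq uw by blast
      thus ?thesis using u0 mm[OF u0V] by auto
    qed
  qed
qed

lemma main:
  assumes xS: "x \<in> S" and xx: "{x, x'} \<in> E" and conn: "\<forall>v\<in>V. (adj E)\<^sup>*\<^sup>* x v"
  shows "\<exists>zs k. k \<ge> 1 \<and> length zs = 2 * k \<and> is_path V E zs \<and>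
           zs ! 0 = x \<and> zs ! (2 * k - 1) = x' \<and>
           (\<forall>i. 1 \<le> i \<and> i < 2 * k \<longrightarrow>
              (odd i \<longrightarrow> {zs ! (i - 1), zs ! i} \<notin> A) \<and>
              (even i \<longrightarrow> {zs ! (i - 1), zs ! i} \<in> A))"
proof -
  have x'V: "x' \<in> V" using eV xx by blast
  have x'S: "x' \<notin> S" using bip xx xS by blast
  have "x' \<in> {u. reach x u} \<union> m ` {u. reach x u}" using cover[OF xS] conn x'V by blast
  moreover have "x' \<notin> {u. reach x u}" using reachS xS x'S by blast
  ultimately obtain u where u: "reach x u" "x' = m u" by auto
  obtain us where us: "us \<noteq> []" "us!0 = x" "last us = u" "distinct us" "set us \<subseteq> {u. reach x u}"
     "\<forall>j. Suc j < length us \<longrightarrow> {m (us!j), us!Suc j} \<in> A" using walk[OF u(1)] by blast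
  have usS: "set us \<subseteq> S" using us(5) reachS xS by blast
  hence usV: "set us \<subseteq> V" using SV by blast
  have musS: "m (us!j) \<notin> S" if "j < length us" for j
    using bip mE usS usV that by (metis DiffD1 nth_mem subsetD)
  define k where "k = length us"
  define f where "f i = (if even i then us!(i div 2) else m (us!(i div 2)))" for i
  define zs where "zs = map f [0..<2*k]"
  have zsn: "zs ! i = f i" if "i < 2*k" for i using that by (simp add: zs_def)
  have k1: "k \<ge> 1" using us(1) by (simp add: k_def Suc_le_eq)
  have lz: "length zs = 2*k" by (simp add: zs_def)
  have fV: "f i \<in> V" if "i < 2*k" for i
  proof -
    have "us ! (i div 2) \<in> V" using that usV k_def by auto
    thus ?thesis using mV by (simp add: f_def)
  qed
  have injf: "inj_on f {0..<2*k}"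
  proof (rule inj_onI)
    fix a b assume a: "a \<in> {0..<2*k}" and b: "b \<in> {0..<2*k}" and fab: "f a = f b"
    have ak: "a div 2 < k" and bk: "b div 2 < k" using a b by auto
    show "a = b"
    proof (cases "even a"; cases "even b")
      assume "even a" "even b"
      hence "us!(a div 2) = us!(b div 2)" using fab by (simp add: f_def)
      hence "a div 2 = b div 2" using us(4) ak bk nth_eq_iff_index_eq k_def by metis
      thus ?thesis using \<open>even a\<close> \<open>even b\<close> by (metis even_two_times_div_two)
    next
      assume "odd a" "odd b"
      hence "m (us!(a div 2)) = m (us!(b div 2))" using fab by (simp add: f_def)
      hence "us!(a div 2) = us!(b div 2)" using minj usV ak bk k_def
        by (metis inj_on_contraD nth_mem subsetD)
      hence "a div 2 = b div 2" using us(4) ak bk nth_eq_iff_index_eq k_def by metis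
      thus ?thesis using \<open>odd a\<close> \<open>odd b\<close> by (metis odd_two_times_div_two_succ)
    next
      assume "even a" "odd b"
      hence "us!(a div 2) = m (us!(b div 2))" using fab by (simp add: f_def)
      moreover have "us!(a div 2) \<in> S" using usS ak k_def nth_mem by blast
      ultimately show ?thesis using musS[of "b div 2"] bk k_def by simp
    next
      assume "odd a" "even b"
      hence "m (us!(a div 2)) = us!(b div 2)" using fab by (simp add: f_def)
      moreover have "us!(b div 2) \<in> S" using usS bk k_def nth_mem by blast
      ultimately show ?thesis using musS[of "a div 2"] ak k_def by simp
    qed
  qed
  have dz: "distinct zs" unfolding zs_def by (simp add: distinct_map injf)
  have odd_edge: "{zs ! (i - 1), zs ! i} \<in> E - A" if "odd i" "i < 2*k" for i
  proof -
    have "zs ! (i - 1) = us!(i div 2)" "zs ! i = m (us!(i div 2))"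
    proof -
      have "i - 1 < 2*k" "even (i - 1)" "(i - 1) div 2 = i div 2" using that by (auto elim!: oddE)
      thus "zs ! (i - 1) = us!(i div 2)" by (simp add: zsn f_def)
      show "zs ! i = m (us!(i div 2))" using that by (simp add: zsn f_def)
    qed
    moreover have "us!(i div 2) \<in> V" using usV that k_def by auto
    ultimately show ?thesis using mE by simp
  qed
  have even_edge: "{zs ! (i - 1), zs ! i} \<in> A" if ie: "even i" "1 \<le> i" "i < 2*k" for i
  proof -
    obtain j where j: "i = Suc (Suc (2*j))"
    proof -
      obtain t where "i = 2*t" using ie(1) by (auto elim: evenE)
      moreover have "t \<ge> 1" using ie(2) calculation by simp
      ultimately show ?thesis using that[of "t - 1"] by simp
    qed
    have "zs ! (i - 1) = m (us!j)" "zs ! i = us!(Suc j)"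
      using ie j by (simp_all add: zsn f_def)
    moreover have "Suc j < length us" using ie j k_def by simp
    ultimately show ?thesis using us(6) by simp
  qed
  have zE: "{zs ! i, zs ! Suc i} \<in> E" if "Suc i < length zs" for i
  proof (cases "odd (Suc i)")
    case True thus ?thesis using odd_edge[of "Suc i"] that lz by simp
  next
    case False thus ?thesis using even_edge[of "Suc i"] that lz AE by auto
  qed
  have setz: "set zs \<subseteq> V" using fV by (auto simp: zs_def)
  have path: "is_path V E zs" unfolding is_path_def using dz setz zE lz k1 by auto
  have z0: "zs ! 0 = x" using k1 us(2) by (simp add: zsn f_def)
  have "2*k - 1 < 2*k" "odd (2*k - 1)" "(2*k - 1) div 2 = k - 1" using k1 by auto
  hence zl: "zs ! (2*k - 1) = x'" using us(1,3) u(2) by (simp add: zsn f_def k_def last_conv_nth)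
  show ?thesis
    using k1 lz path z0 zl odd_edge even_edge by (intro exI[of _ zs] exI[of _ k]) auto
qed
end

theorem lemma3:
  fixes V :: "'a set" and E :: "'a set set"
  assumes "simple_graph V E" and "connected_graph V E" and "bipartite V E" and "cubic V E"
    and "A \<in> two_factors V E" and "x \<in> V" and "{x, x'} \<in> E"
  shows "\<exists>zs k. k \<ge> 1 \<and> length zs = 2 * k \<and> is_path V E zs \<and>
           zs ! 0 = x \<and> zs ! (2 * k - 1) = x' \<and>
           (\<forall>i. 1 \<le> i \<and> i < 2 * k \<longrightarrow>
              (odd i \<longrightarrow> {zs ! (i - 1), zs ! i} \<notin> A) \<and>
              (even i \<longrightarrow> {zs ! (i - 1), zs ! i} \<in> A))"
proof -
  have fin: "finite V" and edges: "\<And>e. e\<in>E \<Longrightarrow> e \<subseteq> V \<and> card e = 2"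
    using assms(1) by (auto simp: simple_graph_def)
  have c2: "\<forall>e\<in>E. card e = 2" using edges by blast
  have AE: "A \<subseteq> E" and dA: "\<And>w. w\<in>V \<Longrightarrow> degree A w = 2" using assms(5) by (auto simp: two_factors_def)
  have c2A: "\<forall>e\<in>A. card e = 2" using c2 AE by blast
  obtain X where X: "X \<subseteq> V" "\<forall>e\<in>E. card (e \<inter> X) = 1" using assms(3) by (auto simp: bipartite_def)
  define S where "S = {v\<in>V. v\<in>X \<longleftrightarrow> x\<in>X}"
  have bipX: "a\<in>X \<longleftrightarrow> b\<notin>X" if ab: "{a,b}\<in>E" for a b
  proof -
    have "a \<noteq> b" using edges[OF ab] by (cases "a = b") auto
    have c: "card ({a,b} \<inter> X) = 1" using X ab by blast
    show ?thesis
    proof (cases "a \<in> X"; cases "b \<in> X")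
      assume "a\<in>X" "b\<in>X" hence "{a,b} \<inter> X = {a,b}" by auto
      thus ?thesis using c \<open>a\<noteq>b\<close> by simp
    next
      assume "a\<notin>X" "b\<notin>X" hence "{a,b} \<inter> X = {}" by auto
      thus ?thesis using c by simp
    qed auto
  qed
  interpret cfg V E A S
  proof
    show "finite V" by (rule fin)
    show "\<And>e. e\<in>E \<Longrightarrow> e \<subseteq> V \<and> card e = 2" by (rule edges)
    show "\<And>v. v\<in>V \<Longrightarrow> card {w. {v,w}\<in>E} = 3"
      using assms(4) deg_nb[OF c2] by (auto simp: cubic_def degree_def)
    show "\<And>v. v\<in>V \<Longrightarrow> card {w. {v,w}\<in>A} = 2"
      using dA deg_nb[OF c2A] by (auto simp: degree_def)
    show "A \<subseteq> E" by (rule AE)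
    show "\<And>a b. {a,b}\<in>E \<Longrightarrow> (a\<in>S \<longleftrightarrow> b\<notin>S)"
      using bipX edges by (auto simp: S_def)
    show "S \<subseteq> V" by (auto simp: S_def)
  qed
  show ?thesis
    by (rule main) (use assms in \<open>auto simp: S_def connected_graph_def\<close>)
qed

end
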